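(* Let $g,h>\tfrac12$, let $M_{\mathrm{I}},M_{\mathrm{II}}\in\mathbb{Z}_{\ge0}$, $M=M_{\mathrm{I}}+M_{\mathrm{II}}$, let $\mathcal{D}=((d_1,t_1),\ldots,(d_M,t_M))$ be an ordered list of pairwise distinct seed labels as described in the context, containing exactly $M_{\mathrm{I}}$ labels of Type I and $M_{\mathrm{II}}$ labels of Type II, and let $n\in\mathbb{Z}_{\ge0}$. For $N\in\{M,M+1\}$, $j=1,\ldots,N$ and $-1<\eta<1$ define $$X^{(N)}_{(\mathrm{v},\mathrm{I}),j}(\eta)=\frac{(-1)^{j-1}}{2^{j-1}}\big(h-\tfrac12-\mathrm{v}\big)_{j-1}\Big(\frac{1+\eta}{2}\Big)^{N-j}P^{(g+j-\frac32,\,\frac32-h-j)}_{\mathrm{v}}(\eta),$$ $$X^{(N)}_{(\mathrm{v},\mathrm{II}),j}(\eta)=\frac{1}{2^{j-1}}\big(g-\tfrac12-\mathrm{v}\big)_{j-1}\Big(\frac{1-\eta}{2}\Big)^{N-j}P^{(\frac32-g-j,\,h+j-\frac32)}_{\mathrm{v}}(\eta),$$ $$Z^{(N)}_{n,j}(\eta)=\frac{1}{2^{j-1}}(n+g+h)_{j-1}P^{(g+j-\frac32,\,h+j-\frac32)}_{n+1-j}(\eta),$$ and let $\vec X^{(N)}_{(\mathrm{v},t)}$, $\vec Z^{(N)}_n$ denote the corresponding column vectors $(\cdot)_{j=1}^N$. Then for $-1<\eta<1$, with $A(\eta)=\big(\frac{1+\eta}{2}\big)^{-M_{\mathrm{I}}(M_{\mathrm{I}}-1)}\big(\frac{1-\eta}{2}\big)^{-M_{\mathrm{II}}(M_{\mathrm{II}}-1)}$,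 $$\Xi_{\mathcal{D}}(\eta)=A(\eta)\det\big(\vec X^{(M)}_{(d_1,t_1)}(\eta)\ \cdots\ \vec X^{(M)}_{(d_M,t_M)}(\eta)\big),$$ $$P_{\mathcal{D},n}(\eta)=A(\eta)\det\big(\vec X^{(M+1)}_{(d_1,t_1)}(\eta)\ \cdots\ \vec X^{(M+1)}_{(d_M,t_M)}(\eta)\ \vec Z^{(M+1)}_n(\eta)\big).$$
   Context: $(a)_k=a(a+1)\cdots(a+k-1)$, $(a)_0=1$. For real $\alpha,\beta$ and $m\in\mathbb{Z}_{\ge0}$ the Jacobi polynomial is $P^{(\alpha,\beta)}_m(\eta)=\frac{1}{m!}\sum_{k=0}^m\frac{(-m)_k(m+\alpha+\beta+1)_k(\alpha+k+1)_{m-k}}{k!}\big(\frac{1-\eta}{2}\big)^k$ (equal to $\frac{(\alpha+1)_m}{m!}\sum_{k}\frac{(-m)_k(m+\alpha+\beta+1)_k}{k!(\alpha+1)_k}(\frac{1-\eta}{2})^k$ when defined), and $P^{(\alpha,\beta)}_m\equiv0$ for $m<0$. For $a\in\mathbb{R}$, $[a]'$ denotes the greatest integer strictly less than $a$. Fix $g,h>\frac12$. A seed label is a pair $(\mathrm{v},t)$, $t\in\{\mathrm{I},\mathrm{II}\}$, with $\mathrm{v}\in\{0,1,\ldots,[h-\frac12]'\}$ if $t=\mathrm{I}$ and $\mathrm{v}\in\{0,1,\ldots,[g-\frac12]'\}$ if $t=\mathrm{II}$. For $-1<\eta<1$ define $\mu_{(\mathrm{v},\mathrm{I})}(\eta)=\big(\frac{1+\eta}{2}\big)^{\frac12-h}P^{(g-\frac12,\frac12-h)}_{\mathrm{v}}(\eta)$,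 $\mu_{(\mathrm{v},\mathrm{II})}(\eta)=\big(\frac{1-\eta}{2}\big)^{\frac12-g}P^{(\frac12-g,h-\frac12)}_{\mathrm{v}}(\eta)$, and $P_n(\eta)=P^{(g-\frac12,h-\frac12)}_n(\eta)$. The Wronskian with respect to $\eta$ is $\mathrm{W}[f_1,\ldots,f_m](\eta)=\det\big(\frac{d^{j-1}f_k}{d\eta^{j-1}}\big)_{1\le j,k\le m}$. For an ordered list $\mathcal{D}=((d_1,t_1),\ldots,(d_M,t_M))$ of seed labels with $M_{\mathrm{I}}$ of Type I and $M_{\mathrm{II}}$ of Type II, the denominator polynomial and multi-indexed Jacobi polynomials are $\Xi_{\mathcal{D}}(\eta)=\mathrm{W}[\mu_{(d_1,t_1)},\ldots,\mu_{(d_M,t_M)}](\eta)\big(\frac{1-\eta}{2}\big)^{(M_{\mathrm{I}}+g-\frac12)M_{\mathrm{II}}}\big(\frac{1+\eta}{2}\big)^{(M_{\mathrm{II}}+h-\frac12)M_{\mathrm{I}}}$ and $P_{\mathcal{D},n}(\eta)=\mathrm{W}[\mu_{(d_1,t_1)},\ldots,\mu_{(d_M,t_M)},P_n](\eta)\big(\frac{1-\eta}{2}\big)^{(M_{\mathrm{I}}+g+\frac12)M_{\mathrm{II}}}\big(\frac{1+\eta}{2}\big)^{(M_{\mathrm{II}}+h+\frac12)M_{\mathrm{I}}}$. *)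

theory Defs
  imports Complex_Main "HOL-Analysis.Derivative" "Jordan_Normal_Form.Determinant"
begin

datatype seed_type = TypeI | TypeII

definition jacobiP :: "real \<Rightarrow> real \<Rightarrow> int \<Rightarrow> real \<Rightarrow> real" where
  "jacobiP \<alpha> \<beta> m \<eta> =
     (if m < 0 then 0 else
       (let m' = nat m in
        (1 / fact m') * (\<Sum>k = 0..m'.
           pochhammer (- real m') k * pochhammer (real m' + \<alpha> + \<beta> + 1) k
           * pochhammer (\<alpha> + real k + 1) (m' - k) / fact k * ((1 - \<eta>) / 2) ^ k)))"

text \<open>Admissible seed label (v,t): v <= [h-1/2]' for Type I, i.e. v < h - 1/2
  (v is an integer), and v < g - 1/2 for Type II.\<close>
definition seed_label :: "real \<Rightarrow> real \<Rightarrow> nat \<times> seed_type \<Rightarrow> bool" where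
  "seed_label g h l = (case l of
      (v, TypeI) \<Rightarrow> real v < h - 1/2
    | (v, TypeII) \<Rightarrow> real v < g - 1/2)"

definition mu :: "real \<Rightarrow> real \<Rightarrow> nat \<times> seed_type \<Rightarrow> real \<Rightarrow> real" where
  "mu g h l \<eta> = (case l of
      (v, TypeI) \<Rightarrow> ((1 + \<eta>) / 2) powr (1/2 - h) * jacobiP (g - 1/2) (1/2 - h) (int v) \<eta>
    | (v, TypeII) \<Rightarrow> ((1 - \<eta>) / 2) powr (1/2 - g) * jacobiP (1/2 - g) (h - 1/2) (int v) \<eta>)"

definition Pn :: "real \<Rightarrow> real \<Rightarrow> nat \<Rightarrow> real \<Rightarrow> real" where
  "Pn g h n \<eta> = jacobiP (g - 1/2) (h - 1/2) (int n) \<eta>"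

definition wronskian :: "(real \<Rightarrow> real) list \<Rightarrow> real \<Rightarrow> real" where
  "wronskian fs \<eta> = det (mat (length fs) (length fs) (\<lambda>(j, k). (deriv ^^ j) (fs ! k) \<eta>))"

definition numI :: "(nat \<times> seed_type) list \<Rightarrow> nat" where
  "numI D = length (filter (\<lambda>l. snd l = TypeI) D)"

definition numII :: "(nat \<times> seed_type) list \<Rightarrow> nat" where
  "numII D = length (filter (\<lambda>l. snd l = TypeII) D)"

definition Xi :: "real \<Rightarrow> real \<Rightarrow> (nat \<times> seed_type) list \<Rightarrow> real \<Rightarrow> real" where
  "Xi g h D \<eta> = wronskian (map (mu g h) D) \<eta>
     * ((1 - \<eta>) / 2) powr ((real (numI D) + g - 1/2) * real (numII D))
     * ((1 + \<eta>) / 2) powr ((real (numII D) + h - 1/2) * real (numI D))"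

definition PD :: "real \<Rightarrow> real \<Rightarrow> (nat \<times> seed_type) list \<Rightarrow> nat \<Rightarrow> real \<Rightarrow> real" where
  "PD g h D n \<eta> = wronskian (map (mu g h) D @ [Pn g h n]) \<eta>
     * ((1 - \<eta>) / 2) powr ((real (numI D) + g + 1/2) * real (numII D))
     * ((1 + \<eta>) / 2) powr ((real (numII D) + h + 1/2) * real (numI D))"

definition Xent :: "real \<Rightarrow> real \<Rightarrow> nat \<Rightarrow> nat \<times> seed_type \<Rightarrow> nat \<Rightarrow> real \<Rightarrow> real" where
  "Xent g h N l j \<eta> = (case l of
      (v, TypeI) \<Rightarrow> (-1) ^ (j - 1) / 2 ^ (j - 1) * pochhammer (h - 1/2 - real v) (j - 1)
          * ((1 + \<eta>) / 2) ^ (N - j)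
          * jacobiP (g + real j - 3/2) (3/2 - h - real j) (int v) \<eta>
    | (v, TypeII) \<Rightarrow> 1 / 2 ^ (j - 1) * pochhammer (g - 1/2 - real v) (j - 1)
          * ((1 - \<eta>) / 2) ^ (N - j)
          * jacobiP (3/2 - g - real j) (h + real j - 3/2) (int v) \<eta>)"

definition Zent :: "real \<Rightarrow> real \<Rightarrow> nat \<Rightarrow> nat \<Rightarrow> real \<Rightarrow> real" where
  "Zent g h n j \<eta> = 1 / 2 ^ (j - 1) * pochhammer (real n + g + h) (j - 1)
      * jacobiP (g + real j - 3/2) (h + real j - 3/2) (int n + 1 - int j) \<eta>"

end

theory Submission imports Defs begin

definition jc :: "real \<Rightarrow> real \<Rightarrow> nat \<Rightarrow> nat \<Rightarrow> real" where
  "jc a b m k = pochhammer (- real m) k * pochhammer (real m + a + b + 1) k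
     * pochhammer (a + real k + 1) (m - k) / (fact k * fact m)"

lemma jacobiP_nat: "jacobiP a b (int m) x = (\<Sum>k=0..m. jc a b m k * ((1 - x)/2)^k)"
  unfolding jacobiP_def jc_def by (simp add: sum_distrib_left field_simps)

lemma jc_beyond: "k > m \<Longrightarrow> jc a b m k = 0"
  unfolding jc_def by (simp add: pochhammer_eq_0_iff)

lemma polyw_deriv:
  "((\<lambda>x. \<Sum>k=0..m. c k * ((1 - x)/2)^k) has_real_derivative
     (\<Sum>k=0..m. c k * (real k * ((1 - x)/2)^(k - 1) * (- 1/2)))) (at x)"
  by (auto intro!: derivative_eq_intros sum.cong simp: mult_ac)

lemma jc_shift:
  "jc a b (Suc m) (Suc k) * (real (Suc k) * (- 1/2)) = (real (Suc m) + a + b + 1) / 2 * jc (a+1) (b+1) m k"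
proof -
  have p1: "pochhammer (- real (Suc m)) (Suc k) = - real (Suc m) * pochhammer (- real m) k"
    by (simp add: pochhammer_rec)
  have p2: "pochhammer (real (Suc m) + a + b + 1) (Suc k) = (real (Suc m) + a + b + 1) * pochhammer (real m + (a+1) + (b+1) + 1) k"
    by (simp add: pochhammer_rec algebra_simps)
  have p3: "pochhammer (a + real (Suc k) + 1) (Suc m - Suc k) = pochhammer ((a+1) + real k + 1) (m - k)"
    by (simp add: algebra_simps)
  have f: "fact (Suc k) * fact (Suc m) = (real (Suc k) * real (Suc m)) * (fact k * fact m :: real)"
    by (simp add: fact_Suc algebra_simps)
  show ?thesis unfolding jc_def p1 p2 p3 f
    by (simp add: field_simps del: of_nat_Suc)
qed

lemma jacobiP_deriv_nat:
  "((\<lambda>x. jacobiP a b (int m) x) has_real_derivative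
      (real m + a + b + 1) / 2 * jacobiP (a+1) (b+1) (int m - 1) x) (at x)"
proof (cases m)
  case 0
  have "jacobiP (a+1) (b+1) (-1) x = 0" by (simp add: jacobiP_def)
  moreover have "(\<lambda>x. jacobiP a b (int m) x) = (\<lambda>x. 1)"
    using 0 by (simp add: jacobiP_def)
  ultimately show ?thesis using 0 by simp
next
  case (Suc m')
  have "(\<Sum>k=0..Suc m'. jc a b (Suc m') k * (real k * ((1 - x)/2)^(k - 1) * (- 1/2)))
      = (\<Sum>k=0..m'. jc a b (Suc m') (Suc k) * (real (Suc k) * ((1 - x)/2)^k * (- 1/2)))"
    by (subst sum.atLeast0_atMost_Suc_shift) simp
  also have "\<dots> = (\<Sum>k=0..m'. (real (Suc m') + a + b + 1) / 2 * jc (a+1) (b+1) m' k * ((1 - x)/2)^k)"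
  proof (rule sum.cong[OF refl])
    fix k show "jc a b (Suc m') (Suc k) * (real (Suc k) * ((1 - x)/2)^k * (- 1/2))
       = (real (Suc m') + a + b + 1) / 2 * jc (a+1) (b+1) m' k * ((1 - x)/2)^k"
    proof -
      have "jc a b (Suc m') (Suc k) * (real (Suc k) * ((1 - x)/2)^k * (- 1/2))
        = (jc a b (Suc m') (Suc k) * (real (Suc k) * (- 1/2))) * ((1 - x)/2)^k"
        by (simp only: mult_ac)
      also have "\<dots> = (real (Suc m') + a + b + 1) / 2 * jc (a+1) (b+1) m' k * ((1 - x)/2)^k"
        by (simp only: jc_shift)
      finally show ?thesis .
    qed
  qed
  also have "\<dots> = (real m + a + b + 1) / 2 * jacobiP (a+1) (b+1) (int m - 1) x"
    using Suc by (simp add: jacobiP_nat sum_distrib_left mult.assoc)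
  finally have e: "(\<Sum>k=0..Suc m'. jc a b (Suc m') k * (real k * ((1 - x)/2)^(k - 1) * (- 1/2)))
      = (real m + a + b + 1) / 2 * jacobiP (a+1) (b+1) (int m - 1) x" .
  have fe: "(\<lambda>x. jacobiP a b (int m) x) = (\<lambda>x. \<Sum>k=0..Suc m'. jc a b (Suc m') k * ((1 - x)/2)^k)"
    using Suc by (simp only: jacobiP_nat)
  show ?thesis unfolding fe
    using polyw_deriv[of "jc a b (Suc m')" "Suc m'" x] unfolding e .
qed

lemma jacobiP_deriv:
  "((\<lambda>x. jacobiP a b m x) has_real_derivative
      (real_of_int m + a + b + 1) / 2 * jacobiP (a+1) (b+1) (m - 1) x) (at x)"
proof (cases "m < 0")
  case True
  then have "(\<lambda>x. jacobiP a b m x) = (\<lambda>x. 0)" by (simp add: jacobiP_def)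
  moreover have "jacobiP (a+1) (b+1) (m - 1) x = 0" using True by (simp add: jacobiP_def)
  ultimately show ?thesis by simp
next
  case False
  then obtain k where "m = int k" by (metis nonneg_int_cases not_less)
  then show ?thesis using jacobiP_deriv_nat[of a b k x] by simp
qed

lemma jc_II: "k \<le> n \<Longrightarrow> (a + real k) * jc a b n k = (real n + a) * jc (a - 1) (b + 1) n k"
proof -
  assume k: "k \<le> n"
  have "(a + real k) * pochhammer (a + real k + 1) (n - k) = pochhammer (a + real k) (Suc (n - k))"
    by (simp add: pochhammer_rec)
  also have "\<dots> = pochhammer (a + real k) (n - k) * (real n + a)"
    using k by (simp add: pochhammer_Suc of_nat_diff)
  finally have e: "(a + real k) * pochhammer (a + real k + 1) (n - k) = (real n + a) * pochhammer (a - 1 + real k + 1) (n - k)"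
    by simp
  have e2: "real n + (a - 1) + (b + 1) + 1 = real n + a + b + 1" by simp
  define A where "A = pochhammer (- real n) k * pochhammer (real n + a + b + 1) k"
  define F where "F = fact k * (fact n :: real)"
  have "(a + real k) * jc a b n k = A * ((a + real k) * pochhammer (a + real k + 1) (n - k)) / F"
    unfolding jc_def A_def F_def by (simp add: algebra_simps)
  also have "\<dots> = A * ((real n + a) * pochhammer (a - 1 + real k + 1) (n - k)) / F"
    by (simp only: e)
  also have "\<dots> = (real n + a) * jc (a - 1) (b + 1) n k"
    unfolding jc_def A_def F_def e2 by (simp add: algebra_simps)
  finally show ?thesis .
qed

lemma w_pow_shift: "(w::real) * (c * (real k * w^(k - 1))) = real k * c * w^k"
  by (cases k) (simp_all add: mult_ac)

lemma poly_II:
  "a * jacobiP a b (int n) x + ((1 - x)/2) * (\<Sum>k=0..n. jc a b n k * (real k * ((1 - x)/2)^(k - 1)))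
    = (real n + a) * jacobiP (a - 1) (b + 1) (int n) x"
proof -
  have "((1 - x)/2) * (\<Sum>k=0..n. jc a b n k * (real k * ((1 - x)/2)^(k - 1)))
      = (\<Sum>k=0..n. real k * jc a b n k * ((1 - x)/2)^k)"
    unfolding sum_distrib_left
  proof (rule sum.cong[OF refl])
    fix k show "(1 - x) / 2 * (jc a b n k * (real k * ((1 - x) / 2) ^ (k - 1))) = real k * jc a b n k * ((1 - x) / 2) ^ k"
      by (rule w_pow_shift)
  qed
  then have "a * jacobiP a b (int n) x + ((1 - x)/2) * (\<Sum>k=0..n. jc a b n k * (real k * ((1 - x)/2)^(k - 1)))
     = (\<Sum>k=0..n. (a + real k) * jc a b n k * ((1 - x)/2)^k)"
    by (simp add: jacobiP_nat sum_distrib_left sum.distrib[symmetric] algebra_simps)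
  also have "\<dots> = (\<Sum>k=0..n. (real n + a) * jc (a - 1) (b + 1) n k * ((1 - x)/2)^k)"
    by (rule sum.cong[OF refl]) (simp add: jc_II)
  also have "\<dots> = (real n + a) * jacobiP (a - 1) (b + 1) (int n) x"
    by (simp add: jacobiP_nat sum_distrib_left mult.assoc)
  finally show ?thesis .
qed

lemma jc_I: assumes k: "k \<le> n"
  shows "(b + real k) * jc a b n k - real (Suc k) * jc a b n (Suc k) = (real n + b) * jc (a + 1) (b - 1) n k"
proof (cases "k = n")
  case True
  have z: "jc a b n (Suc n) = 0" by (simp add: jc_beyond)
  have "real n + (a + 1) + (b - 1) + 1 = real n + a + b + 1" by simp
  then have e: "jc a b n n = jc (a + 1) (b - 1) n n" unfolding jc_def by (simp add: add.assoc)
  show ?thesis using True by (simp only: z e) (simp add: algebra_simps)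
next
  case False
  then obtain j where nj: "n - k = Suc j" "n - Suc k = j" using k
    by (metis Suc_diff_Suc le_neq_implies_less)
  have kn: "real n - real k = real j + 1" using nj k
    by (metis add.commute of_nat_Suc of_nat_diff)
  define A where "A = pochhammer (- real n) k * pochhammer (real n + a + b + 1) k"
  define F where "F = fact k * (fact n :: real)"
  define p where "p = pochhammer (a + real k + 2) j"
  have F0: "F \<noteq> 0" unfolding F_def by simp
  have c1: "jc a b n k = A * (a + real k + 1) * p / F"
    unfolding jc_def A_def F_def p_def nj by (simp add: pochhammer_rec algebra_simps)
  have c2: "real (Suc k) * jc a b n (Suc k) = A * (real k - real n) * (real n + a + b + 1 + real k) * p / F"
  proof -
    have q1: "pochhammer (- real n) (Suc k) = pochhammer (- real n) k * (real k - real n)"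
      by (simp add: pochhammer_Suc)
    have q2: "pochhammer (real n + a + b + 1) (Suc k) = pochhammer (real n + a + b + 1) k * (real n + a + b + 1 + real k)"
      by (simp add: pochhammer_Suc)
    have q3: "pochhammer (a + real (Suc k) + 1) (n - Suc k) = p"
      unfolding nj p_def by (simp add: algebra_simps)
    have q4: "fact (Suc k) * fact n = real (Suc k) * F"
      unfolding F_def by (simp add: fact_Suc del: of_nat_Suc)
    have "real (Suc k) * jc a b n (Suc k) = real (Suc k) * (A * (real k - real n) * (real n + a + b + 1 + real k) * p) / (real (Suc k) * F)"
      unfolding jc_def q1 q2 q3 q4 A_def by (simp only: mult_ac times_divide_eq_right)
    also have "\<dots> = A * (real k - real n) * (real n + a + b + 1 + real k) * p / F"
      by (simp del: of_nat_Suc)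
    finally show ?thesis .
  qed
  have c3: "jc (a + 1) (b - 1) n k = A * p * (a + real n + 1) / F"
  proof -
    have "pochhammer (a + 1 + real k + 1) (n - k) = p * (a + real n + 1)"
      unfolding nj p_def pochhammer_Suc using kn by (simp add: algebra_simps)
    moreover have "real n + (a + 1) + (b - 1) + 1 = real n + a + b + 1" by simp
    ultimately show ?thesis unfolding jc_def A_def F_def by (simp add: algebra_simps)
  qed
  have poly: "(b + real k) * (a + real k + 1) - (real k - real n) * (real n + a + b + 1 + real k)
      = (real n + b) * (a + real n + 1)"
    by (simp add: algebra_simps)
  have "(b + real k) * jc a b n k - real (Suc k) * jc a b n (Suc k)
      = A * p / F * ((b + real k) * (a + real k + 1) - (real k - real n) * (real n + a + b + 1 + real k))"
    unfolding c1 c2 using F0 by (simp add: field_simps)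
  also have "\<dots> = (real n + b) * jc (a + 1) (b - 1) n k"
    unfolding poly c3 using F0 by (simp add: field_simps)
  finally show ?thesis .
qed

lemma shift_sum: assumes "c (Suc n) = 0"
  shows "(\<Sum>k=0..n. c k * (real k * (w::real)^(k - 1))) = (\<Sum>k=0..n. real (Suc k) * c (Suc k) * w^k)"
proof -
  have "(\<Sum>k=0..n. c k * (real k * w^(k - 1))) = (\<Sum>k=0..Suc n. c k * (real k * w^(k - 1)))"
    using assms by simp
  also have "\<dots> = (\<Sum>k=0..n. real (Suc k) * c (Suc k) * w^k)"
    by (subst sum.atLeast0_atMost_Suc_shift) (simp add: mult_ac)
  finally show ?thesis .
qed

lemma poly_I:
  "b * jacobiP a b (int n) x - ((1 + x)/2) * (\<Sum>k=0..n. jc a b n k * (real k * ((1 - x)/2)^(k - 1)))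
    = (real n + b) * jacobiP (a + 1) (b - 1) (int n) x"
proof -
  define w where "w = (1 - x) / 2"
  have u: "(1 + x) / 2 = 1 - w" unfolding w_def by (simp add: field_simps)
  have s1: "(\<Sum>k=0..n. jc a b n k * (real k * w^(k - 1))) = (\<Sum>k=0..n. real (Suc k) * jc a b n (Suc k) * w^k)"
    by (rule shift_sum) (simp add: jc_beyond)
  have s2: "w * (\<Sum>k=0..n. jc a b n k * (real k * w^(k - 1))) = (\<Sum>k=0..n. real k * jc a b n k * w^k)"
    unfolding sum_distrib_left by (rule sum.cong[OF refl]) (rule w_pow_shift)
  have "b * jacobiP a b (int n) x - ((1 + x)/2) * (\<Sum>k=0..n. jc a b n k * (real k * ((1 - x)/2)^(k - 1)))
     = b * (\<Sum>k=0..n. jc a b n k * w^k) - (\<Sum>k=0..n. jc a b n k * (real k * w^(k - 1)))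
       + w * (\<Sum>k=0..n. jc a b n k * (real k * w^(k - 1)))"
    unfolding u jacobiP_nat w_def[symmetric] by (simp add: algebra_simps)
  also have "\<dots> = (\<Sum>k=0..n. ((b + real k) * jc a b n k - real (Suc k) * jc a b n (Suc k)) * w^k)"
    unfolding s2 unfolding s1 by (simp add: sum_distrib_left sum.distrib[symmetric] sum_subtractf[symmetric] algebra_simps)
  also have "\<dots> = (\<Sum>k=0..n. (real n + b) * jc (a + 1) (b - 1) n k * w^k)"
  proof (rule sum.cong[OF refl])
    fix k assume "k \<in> {0..n}"
    then have "k \<le> n" by simp
    then show "((b + real k) * jc a b n k - real (Suc k) * jc a b n (Suc k)) * w^k = (real n + b) * jc (a + 1) (b - 1) n k * w^k"
      using jc_I[of k n b a] by simp
  qed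
  also have "\<dots> = (real n + b) * jacobiP (a + 1) (b - 1) (int n) x"
    unfolding jacobiP_nat w_def by (simp add: sum_distrib_left mult.assoc)
  finally show ?thesis .
qed

lemma jacobiP_deriv_sum:
  "((\<lambda>x. jacobiP a b (int n) x) has_real_derivative
     (- 1/2) * (\<Sum>k=0..n. jc a b n k * (real k * ((1 - x)/2)^(k - 1)))) (at x)"
proof -
  have fe: "(\<lambda>x. jacobiP a b (int n) x) = (\<lambda>x. \<Sum>k=0..n. jc a b n k * ((1 - x)/2)^k)"
    by (simp only: jacobiP_nat)
  have "(\<Sum>k=0..n. jc a b n k * (real k * ((1 - x)/2)^(k - 1) * (- 1/2)))
     = (- 1/2) * (\<Sum>k=0..n. jc a b n k * (real k * ((1 - x)/2)^(k - 1)))"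
    by (simp add: sum_distrib_left mult_ac)
  then show ?thesis unfolding fe using polyw_deriv[of "jc a b n" n x] by simp
qed

lemma deriv_I:
  assumes x: "-1 < x"
  shows "((\<lambda>x. ((1+x)/2) powr b * jacobiP a b (int n) x) has_real_derivative
     (real n + b) / 2 * ((1+x)/2) powr (b - 1) * jacobiP (a+1) (b-1) (int n) x) (at x)"
proof -
  define S' where "S' = (\<Sum>k=0..n. jc a b n k * (real k * ((1 - x)/2)^(k - 1)))"
  have u0: "(1+x)/2 > 0" using x by simp
  have du: "((\<lambda>x. (1+x)/2) has_real_derivative 1/2) (at x)"
    by (auto intro!: derivative_eq_intros)
  have d: "((\<lambda>x. ((1+x)/2) powr b * jacobiP a b (int n) x) has_real_derivative
     (b * ((1+x)/2) powr (b - of_nat 1) * (1/2)) * jacobiP a b (int n) x + ((- 1/2) * S') * ((1+x)/2) powr b) (at x)"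
    unfolding S'_def
    by (rule DERIV_mult[OF DERIV_fun_powr[OF du u0] jacobiP_deriv_sum])
  have pw: "((1+x)/2) powr b = ((1+x)/2) powr (b - 1) * ((1+x)/2)"
    using u0 powr_add[of "(1+x)/2" "b - 1" 1] by simp
  have "(b * ((1+x)/2) powr (b - of_nat 1) * (1/2)) * jacobiP a b (int n) x + ((- 1/2) * S') * ((1+x)/2) powr b
     = ((1+x)/2) powr (b - 1) / 2 * (b * jacobiP a b (int n) x - ((1 + x)/2) * S')"
    unfolding pw by (simp add: field_simps)
  also have "\<dots> = (real n + b) / 2 * ((1+x)/2) powr (b - 1) * jacobiP (a+1) (b-1) (int n) x"
    unfolding S'_def poly_I by simp
  finally show ?thesis using DERIV_cong[OF d] by blast
qed

lemma deriv_II: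
  assumes x: "x < 1"
  shows "((\<lambda>x. ((1-x)/2) powr a * jacobiP a b (int n) x) has_real_derivative
     - ((real n + a) / 2) * ((1-x)/2) powr (a - 1) * jacobiP (a-1) (b+1) (int n) x) (at x)"
proof -
  define S' where "S' = (\<Sum>k=0..n. jc a b n k * (real k * ((1 - x)/2)^(k - 1)))"
  have u0: "(1-x)/2 > 0" using x by simp
  have du: "((\<lambda>x. (1-x)/2) has_real_derivative - 1/2) (at x)"
    by (auto intro!: derivative_eq_intros)
  have d: "((\<lambda>x. ((1-x)/2) powr a * jacobiP a b (int n) x) has_real_derivative
     (a * ((1-x)/2) powr (a - of_nat 1) * (- 1/2)) * jacobiP a b (int n) x + ((- 1/2) * S') * ((1-x)/2) powr a) (at x)"
    unfolding S'_def
    by (rule DERIV_mult[OF DERIV_fun_powr[OF du u0] jacobiP_deriv_sum])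
  have pw: "((1-x)/2) powr a = ((1-x)/2) powr (a - 1) * ((1-x)/2)"
    using u0 powr_add[of "(1-x)/2" "a - 1" 1] by simp
  have "(a * ((1-x)/2) powr (a - of_nat 1) * (- 1/2)) * jacobiP a b (int n) x + ((- 1/2) * S') * ((1-x)/2) powr a
     = - (((1-x)/2) powr (a - 1) / 2 * (a * jacobiP a b (int n) x + ((1 - x)/2) * S'))"
    unfolding pw by (simp add: field_simps)
  also have "\<dots> = - ((real n + a) / 2) * ((1-x)/2) powr (a - 1) * jacobiP (a-1) (b+1) (int n) x"
    unfolding S'_def poly_II by simp
  finally show ?thesis using DERIV_cong[OF d] by blast
qed

lemma funpow_deriv:
  assumes S: "open S" and f0: "\<And>x. x \<in> S \<Longrightarrow> f x = F 0 x"
    and dF: "\<And>j x. x \<in> S \<Longrightarrow> (F j has_real_derivative F (Suc j) x) (at x)"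
  shows "x \<in> S \<Longrightarrow> (deriv ^^ j) f x = F j x"
proof (induction j arbitrary: x)
  case 0 then show ?case using f0 by simp
next
  case (Suc j)
  have "((deriv ^^ j) f has_real_derivative F (Suc j) x) (at x)"
    by (rule has_field_derivative_transform_within_open[OF dF[OF Suc.prems] S Suc.prems])
       (simp add: Suc.IH)
  then show ?case by (simp add: DERIV_imp_deriv)
qed

definition FI :: "real \<Rightarrow> real \<Rightarrow> nat \<Rightarrow> nat \<Rightarrow> real \<Rightarrow> real" where
  "FI g h v j x = (-1)^j / 2^j * pochhammer (h - 1/2 - real v) j *
     (((1+x)/2) powr (1/2 - h - real j) * jacobiP (g - 1/2 + real j) (1/2 - h - real j) (int v) x)"

definition FII :: "real \<Rightarrow> real \<Rightarrow> nat \<Rightarrow> nat \<Rightarrow> real \<Rightarrow> real" where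
  "FII g h v j x = pochhammer (g - 1/2 - real v) j / 2^j *
     (((1-x)/2) powr (1/2 - g - real j) * jacobiP (1/2 - g - real j) (h - 1/2 + real j) (int v) x)"

definition FZ :: "real \<Rightarrow> real \<Rightarrow> nat \<Rightarrow> nat \<Rightarrow> real \<Rightarrow> real" where
  "FZ g h n j x = pochhammer (real n + g + h) j / 2^j *
     jacobiP (g - 1/2 + real j) (h - 1/2 + real j) (int n - int j) x"

lemma FI_deriv: assumes "-1 < x"
  shows "(FI g h v j has_real_derivative FI g h v (Suc j) x) (at x)"
proof -
  have d: "((\<lambda>x. ((1+x)/2) powr (1/2 - h - real j) * jacobiP (g - 1/2 + real j) (1/2 - h - real j) (int v) x)
     has_real_derivative (real v + (1/2 - h - real j)) / 2 * ((1+x)/2) powr ((1/2 - h - real j) - 1)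
        * jacobiP ((g - 1/2 + real j) + 1) ((1/2 - h - real j) - 1) (int v) x) (at x)"
    by (rule deriv_I[OF assms])
  have e1: "(1/2 - h - real j) - 1 = 1/2 - h - real (Suc j)" by simp
  have e2: "(g - 1/2 + real j) + 1 = g - 1/2 + real (Suc j)" by simp
  have "((\<lambda>x. (-1)^j / 2^j * pochhammer (h - 1/2 - real v) j *
     (((1+x)/2) powr (1/2 - h - real j) * jacobiP (g - 1/2 + real j) (1/2 - h - real j) (int v) x))
     has_real_derivative (-1)^j / 2^j * pochhammer (h - 1/2 - real v) j * ((real v + (1/2 - h - real j)) / 2 * ((1+x)/2) powr (1/2 - h - real (Suc j))
        * jacobiP (g - 1/2 + real (Suc j)) (1/2 - h - real (Suc j)) (int v) x)) (at x)"
    by (rule DERIV_cmult) (use d in \<open>simp only: e1 e2\<close>)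
  moreover have "(-1)^j / 2^j * pochhammer (h - 1/2 - real v) j * ((real v + (1/2 - h - real j)) / 2 * ((1+x)/2) powr (1/2 - h - real (Suc j))
        * jacobiP (g - 1/2 + real (Suc j)) (1/2 - h - real (Suc j)) (int v) x) = FI g h v (Suc j) x"
    unfolding FI_def pochhammer_Suc by (simp add: field_simps)
  ultimately show ?thesis unfolding FI_def[abs_def] by simp
qed

lemma FII_deriv: assumes "x < 1"
  shows "(FII g h v j has_real_derivative FII g h v (Suc j) x) (at x)"
proof -
  have d: "((\<lambda>x. ((1-x)/2) powr (1/2 - g - real j) * jacobiP (1/2 - g - real j) (h - 1/2 + real j) (int v) x)
     has_real_derivative - ((real v + (1/2 - g - real j)) / 2) * ((1-x)/2) powr ((1/2 - g - real j) - 1)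
        * jacobiP ((1/2 - g - real j) - 1) ((h - 1/2 + real j) + 1) (int v) x) (at x)"
    by (rule deriv_II[OF assms])
  have e1: "(1/2 - g - real j) - 1 = 1/2 - g - real (Suc j)" by simp
  have e2: "(h - 1/2 + real j) + 1 = h - 1/2 + real (Suc j)" by simp
  have "((\<lambda>x. pochhammer (g - 1/2 - real v) j / 2^j *
     (((1-x)/2) powr (1/2 - g - real j) * jacobiP (1/2 - g - real j) (h - 1/2 + real j) (int v) x))
     has_real_derivative pochhammer (g - 1/2 - real v) j / 2^j * (- ((real v + (1/2 - g - real j)) / 2) * ((1-x)/2) powr (1/2 - g - real (Suc j))
        * jacobiP (1/2 - g - real (Suc j)) (h - 1/2 + real (Suc j)) (int v) x)) (at x)"
    by (rule DERIV_cmult) (use d in \<open>simp only: e1 e2\<close>)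
  moreover have "pochhammer (g - 1/2 - real v) j / 2^j * (- ((real v + (1/2 - g - real j)) / 2) * ((1-x)/2) powr (1/2 - g - real (Suc j))
        * jacobiP (1/2 - g - real (Suc j)) (h - 1/2 + real (Suc j)) (int v) x) = FII g h v (Suc j) x"
    unfolding FII_def pochhammer_Suc by (simp add: field_simps)
  ultimately show ?thesis unfolding FII_def[abs_def] by simp
qed

lemma FZ_deriv:
  shows "(FZ g h n j has_real_derivative FZ g h n (Suc j) x) (at x)"
proof -
  have d: "((\<lambda>x. jacobiP (g - 1/2 + real j) (h - 1/2 + real j) (int n - int j) x)
     has_real_derivative (real_of_int (int n - int j) + (g - 1/2 + real j) + (h - 1/2 + real j) + 1) / 2
        * jacobiP ((g - 1/2 + real j) + 1) ((h - 1/2 + real j) + 1) ((int n - int j) - 1) x) (at x)"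
    by (rule jacobiP_deriv)
  have e1: "(g - 1/2 + real j) + 1 = g - 1/2 + real (Suc j)" by simp
  have e2: "(h - 1/2 + real j) + 1 = h - 1/2 + real (Suc j)" by simp
  have e3: "(int n - int j) - 1 = int n - int (Suc j)" by simp
  have e4: "real_of_int (int n - int j) + (g - 1/2 + real j) + (h - 1/2 + real j) + 1 = real n + g + h + real j"
    by simp
  have "((\<lambda>x. pochhammer (real n + g + h) j / 2^j *
     jacobiP (g - 1/2 + real j) (h - 1/2 + real j) (int n - int j) x)
     has_real_derivative pochhammer (real n + g + h) j / 2^j * ((real n + g + h + real j) / 2
        * jacobiP (g - 1/2 + real (Suc j)) (h - 1/2 + real (Suc j)) (int n - int (Suc j)) x)) (at x)"
    by (rule DERIV_cmult) (use d in \<open>simp only: e1 e2 e3 e4\<close>)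
  moreover have "pochhammer (real n + g + h) j / 2^j * ((real n + g + h + real j) / 2
        * jacobiP (g - 1/2 + real (Suc j)) (h - 1/2 + real (Suc j)) (int n - int (Suc j)) x) = FZ g h n (Suc j) x"
    unfolding FZ_def pochhammer_Suc by (simp add: field_simps)
  ultimately show ?thesis unfolding FZ_def[abs_def] by simp
qed

definition cf :: "real \<Rightarrow> real \<Rightarrow> nat \<Rightarrow> real \<Rightarrow> nat \<times> seed_type \<Rightarrow> real" where
  "cf g h N x l = (case snd l of TypeI \<Rightarrow> ((1+x)/2) powr (3/2 - h - real N)
                  | TypeII \<Rightarrow> ((1-x)/2) powr (3/2 - g - real N))"

lemma powr_split: assumes "(u::real) > 0" "j < N"
  shows "u powr (c - real j) = u powr (c + 1 - real N) * u ^ (N - Suc j)"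
proof -
  have "u ^ (N - Suc j) = u powr real (N - Suc j)" by (simp only: powr_realpow[OF assms(1)])
  moreover have "real (N - Suc j) = real N - 1 - real j" using assms by (simp add: of_nat_diff)
  ultimately show ?thesis using assms by (simp add: powr_add[symmetric])
qed

lemma entry_mu:
  assumes x: "-1 < x" "x < 1" and j: "j < N"
  shows "(deriv ^^ j) (mu g h l) x = cf g h N x l * Xent g h N l (Suc j) x"
proof -
  obtain v t where l: "l = (v, t)" by force
  have S: "open {-1<..<(1::real)}" "x \<in> {-1<..<1}" using x by auto
  show ?thesis
  proof (cases t)
    case TypeI
    have "(deriv ^^ j) (mu g h l) x = FI g h v j x"
      apply (rule funpow_deriv[OF S(1) _ _ S(2)])
      subgoal by (simp add: l TypeI mu_def FI_def)
      subgoal by (rule FI_deriv) auto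
      done
    also have "\<dots> = cf g h N x l * Xent g h N l (Suc j) x"
    proof -
      have u: "(1+x)/2 > 0" using x by simp
      have a1: "g + real (Suc j) - 3/2 = g - 1/2 + real j" by simp
      have a2: "3/2 - h - real (Suc j) = 1/2 - h - real j" by simp
      show ?thesis unfolding FI_def cf_def Xent_def l TypeI a1 a2
        using powr_split[OF u j, of "1/2 - h"] by (simp add: field_simps)
    qed
    finally show ?thesis .
  next
    case TypeII
    have "(deriv ^^ j) (mu g h l) x = FII g h v j x"
      apply (rule funpow_deriv[OF S(1) _ _ S(2)])
      subgoal by (simp add: l TypeII mu_def FII_def)
      subgoal by (rule FII_deriv) auto
      done
    also have "\<dots> = cf g h N x l * Xent g h N l (Suc j) x"
    proof -
      have u: "(1-x)/2 > 0" using x by simp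
      have a1: "3/2 - g - real (Suc j) = 1/2 - g - real j" by simp
      have a2: "h + real (Suc j) - 3/2 = h - 1/2 + real j" by simp
      show ?thesis unfolding FII_def cf_def Xent_def l TypeII a1 a2
        using powr_split[OF u j, of "1/2 - g"] by (simp add: field_simps)
    qed
    finally show ?thesis .
  qed
qed

lemma entry_Pn:
  assumes x: "-1 < x" "x < 1"
  shows "(deriv ^^ j) (Pn g h n) x = Zent g h n (Suc j) x"
proof -
  have S: "open {-1<..<(1::real)}" "x \<in> {-1<..<1}" using x by auto
  have "(deriv ^^ j) (Pn g h n) x = FZ g h n j x"
    apply (rule funpow_deriv[OF S(1) _ _ S(2)])
    subgoal by (simp add: Pn_def FZ_def)
    subgoal by (rule FZ_deriv)
    done
  also have "\<dots> = Zent g h n (Suc j) x"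
  proof -
    have a1: "g + real (Suc j) - 3/2 = g - 1/2 + real j" by simp
    have a2: "h + real (Suc j) - 3/2 = h - 1/2 + real j" by simp
    have a3: "int n + 1 - int (Suc j) = int n - int j" by simp
    show ?thesis unfolding FZ_def Zent_def a1 a2 a3 by (simp add: field_simps)
  qed
  finally show ?thesis .
qed

lemma det_scale_cols:
  "det (mat n n (\<lambda>(i,k). c k * f i k)) = (\<Prod>k<n. c k) * det (mat n n (\<lambda>(i,k). f i k))"
proof -
  have "det (mat n n (\<lambda>(i,k). c k * f i k)) = (\<Sum>p | p permutes {0..<n}. signof p * (\<Prod>j<n. c j * f (p j) j))"
    by (subst det_col[of _ n]) (auto intro!: sum.cong prod.cong)
  also have "\<dots> = (\<Sum>p | p permutes {0..<n}. (\<Prod>k<n. c k) * (signof p * (\<Prod>j<n. f (p j) j)))"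
    by (rule sum.cong[OF refl]) (simp add: prod.distrib mult_ac)
  also have "\<dots> = (\<Prod>k<n. c k) * (\<Sum>p | p permutes {0..<n}. signof p * (\<Prod>j<n. f (p j) j))"
    by (simp add: sum_distrib_left)
  also have "(\<Sum>p | p permutes {0..<n}. signof p * (\<Prod>j<n. f (p j) j)) = det (mat n n (\<lambda>(i,k). f i k))"
    by (subst det_col[of _ n]) (auto intro!: sum.cong prod.cong)
  finally show ?thesis .
qed

lemma prod_cf:
  "(\<Prod>k<length D. cf g h N x (D!k)) =
     (((1+x)/2) powr (3/2 - h - real N)) ^ length (filter (\<lambda>l. snd l = TypeI) D)
   * (((1-x)/2) powr (3/2 - g - real N)) ^ length (filter (\<lambda>l. snd l = TypeII) D)"
proof (induction D)
  case Nil then show ?case by simp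
next
  case (Cons l D)
  show ?case
    unfolding length_Cons prod.lessThan_Suc_shift
    using Cons.IH by (cases "snd l") (simp_all add: cf_def)
qed

lemma powr_combine: assumes "(u::real) > 0" "e * real m + c = d"
  shows "(u powr e) ^ m * u powr c = u powr d"
proof -
  have "(u powr e) ^ m = u powr (e * real m)"
    using assms(1) by (simp add: powr_realpow[symmetric] powr_powr)
  then show ?thesis using assms by (simp add: powr_add[symmetric])
qed

lemma length_D: "length (filter (\<lambda>l. snd l = TypeI) D) + length (filter (\<lambda>l. snd l = TypeII) D) = length D"
proof -
  have "filter (\<lambda>l. snd l = TypeII) D = filter (\<lambda>l. \<not> snd l = TypeI) D"
    by (rule filter_cong[OF refl]) (metis seed_type.exhaust seed_type.distinct(1))
  then show ?thesis using sum_length_filter_compl[of "\<lambda>l. snd l = TypeI" D] by simp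
qed

theorem mainTheorem2:
  fixes g h :: real and D :: "(nat \<times> seed_type) list" and MI MII n :: nat and \<eta> :: real
  assumes "g > 1/2" and "h > 1/2"
    and "distinct D" and "\<forall>l \<in> set D. seed_label g h l"
    and "MI = length (filter (\<lambda>l. snd l = TypeI) D)"
    and "MII = length (filter (\<lambda>l. snd l = TypeII) D)"
    and "-1 < \<eta>" and "\<eta> < 1"
  shows "(Xi g h D \<eta> =
           ((1 + \<eta>) / 2) powr (- (real MI * (real MI - 1)))
         * ((1 - \<eta>) / 2) powr (- (real MII * (real MII - 1)))
         * det (mat (MI + MII) (MI + MII)
                 (\<lambda>(i, k). Xent g h (MI + MII) (D ! k) (i + 1) \<eta>))) \<and>
         (PD g h D n \<eta> =
           ((1 + \<eta>) / 2) powr (- (real MI * (real MI - 1)))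
         * ((1 - \<eta>) / 2) powr (- (real MII * (real MII - 1)))
         * det (mat (MI + MII + 1) (MI + MII + 1)
                 (\<lambda>(i, k). if k < MI + MII then Xent g h (MI + MII + 1) (D ! k) (i + 1) \<eta>
                            else Zent g h n (i + 1) \<eta>)))"
proof -
  note as = assms
  define u where "u = (1 + \<eta>) / 2"
  define w where "w = (1 - \<eta>) / 2"
  have u0: "u > 0" and w0: "w > 0" using as(7,8) by (simp_all add: u_def w_def)
  have LD: "length D = MI + MII" using length_D[of D] as(5,6) by simp
  define M where "M = MI + MII"
  have nI: "numI D = MI" "numII D = MII" using as(5,6) by (simp_all add: numI_def numII_def)
  have W1: "wronskian (map (mu g h) D) \<eta> = (\<Prod>k<M. cf g h M \<eta> (D!k))
      * det (mat M M (\<lambda>(i, k). Xent g h M (D ! k) (i + 1) \<eta>))"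
  proof -
    have "mat (length (map (mu g h) D)) (length (map (mu g h) D)) (\<lambda>(j, k). (deriv ^^ j) (map (mu g h) D ! k) \<eta>)
        = mat M M (\<lambda>(i, k). cf g h M \<eta> (D!k) * Xent g h M (D ! k) (i + 1) \<eta>)"
      by (rule eq_matI) (auto simp: LD M_def entry_mu as(7,8))
    then show ?thesis unfolding wronskian_def by (simp add: det_scale_cols)
  qed
  have P1: "(\<Prod>k<M. cf g h M \<eta> (D!k)) = (u powr (3/2 - h - real M)) ^ MI * (w powr (3/2 - g - real M)) ^ MII"
    using prod_cf[of g h M \<eta> D] LD as(5,6) unfolding M_def u_def w_def by simp
  have A1: "(u powr (3/2 - h - real M)) ^ MI * u powr ((real MII + h - 1/2) * real MI) = u powr (- (real MI * (real MI - 1)))"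
    by (rule powr_combine[OF u0]) (simp add: M_def algebra_simps)
  have B1: "(w powr (3/2 - g - real M)) ^ MII * w powr ((real MI + g - 1/2) * real MII) = w powr (- (real MII * (real MII - 1)))"
    by (rule powr_combine[OF w0]) (simp add: M_def algebra_simps)
  have part1: "Xi g h D \<eta> = u powr (- (real MI * (real MI - 1))) * w powr (- (real MII * (real MII - 1)))
      * det (mat M M (\<lambda>(i, k). Xent g h M (D ! k) (i + 1) \<eta>))"
    unfolding Xi_def W1 P1 nI u_def[symmetric] w_def[symmetric] A1[symmetric] B1[symmetric]
    by (simp add: mult_ac)
  have W2: "wronskian (map (mu g h) D @ [Pn g h n]) \<eta> = (\<Prod>k<M. cf g h (M+1) \<eta> (D!k))
      * det (mat (M+1) (M+1) (\<lambda>(i, k). if k < M then Xent g h (M+1) (D ! k) (i + 1) \<eta> else Zent g h n (i + 1) \<eta>))"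
  proof -
    have "mat (length (map (mu g h) D @ [Pn g h n])) (length (map (mu g h) D @ [Pn g h n]))
           (\<lambda>(j, k). (deriv ^^ j) ((map (mu g h) D @ [Pn g h n]) ! k) \<eta>)
        = mat (M+1) (M+1) (\<lambda>(i, k). (if k < M then cf g h (M+1) \<eta> (D!k) else 1) *
            (if k < M then Xent g h (M+1) (D ! k) (i + 1) \<eta> else Zent g h n (i + 1) \<eta>))"
      by (rule eq_matI) (auto simp: LD M_def entry_mu entry_Pn nth_append as(7,8))
    moreover have "(\<Prod>k<M+1. (if k < M then cf g h (M+1) \<eta> (D!k) else 1)) = (\<Prod>k<M. cf g h (M+1) \<eta> (D!k))"
      by simp
    ultimately show ?thesis unfolding wronskian_def by (simp add: det_scale_cols)
  qed
  have P2: "(\<Prod>k<M. cf g h (M+1) \<eta> (D!k)) = (u powr (3/2 - h - real (M+1))) ^ MI * (w powr (3/2 - g - real (M+1))) ^ MII"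
    using prod_cf[of g h "M+1" \<eta> D] LD as(5,6) unfolding M_def u_def w_def by simp
  have A2: "(u powr (3/2 - h - real (M+1))) ^ MI * u powr ((real MII + h + 1/2) * real MI) = u powr (- (real MI * (real MI - 1)))"
    by (rule powr_combine[OF u0]) (simp add: M_def algebra_simps)
  have B2: "(w powr (3/2 - g - real (M+1))) ^ MII * w powr ((real MI + g + 1/2) * real MII) = w powr (- (real MII * (real MII - 1)))"
    by (rule powr_combine[OF w0]) (simp add: M_def algebra_simps)
  have part2: "PD g h D n \<eta> = u powr (- (real MI * (real MI - 1))) * w powr (- (real MII * (real MII - 1)))
      * det (mat (M+1) (M+1) (\<lambda>(i, k). if k < M then Xent g h (M+1) (D ! k) (i + 1) \<eta> else Zent g h n (i + 1) \<eta>))"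
    unfolding PD_def W2 P2 nI u_def[symmetric] w_def[symmetric] A2[symmetric] B2[symmetric]
    by (simp add: mult_ac)
  show ?thesis using part1 part2 unfolding M_def u_def w_def by simp
qed

end
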